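(* Let $a,b>0$ and define, for $w\in(0,\infty)$, $$\pi_2(w\mid a,b)=\frac{1}{B(a,b)}\frac{1}{1+w}\frac{1}{1+\log(1+w)}\frac{[\log\{1+\log(1+w)\}]^{a-1}}{[1+\log\{1+\log(1+w)\}]^{a+b}},$$ where $B$ is the beta function. Then $\int_0^\infty\pi_2(w\mid a,b)\,dw=1$; $\pi_2(w\mid a,b)$ is asymptotically proportional to $w^{a-1}$ as $w\to0$ and to $w^{-1}(\log w)^{-1}(\log\log w)^{-(1+b)}$ as $w\to\infty$; and $\pi=\pi_2(\cdot\mid a,b)$ satisfies both of the following with $c=b$ and some $C>0$, $M>0$: $$t\pi(t)\sim\frac{C}{\{1+\log(1+t)\}[1+\log\{1+\log(1+t)\}]^{1+c}}\quad(t\to\infty),$$ $$t\pi(t)\le M\frac{1}{1+\log(1+1/t)}\frac{1}{1+\log(1+t)}\frac{1}{[1+\log\{1+\log(1+1/t)\}]^{1+c}}\frac{1}{[1+\log\{1+\log(1+t)\}]^{1+c}}\quad\text{for all }t>0.$$ *)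

theory Defs
  imports "HOL-Analysis.Analysis" "HOL-Library.Landau_Symbols"
begin

definition pi2 :: "real \<Rightarrow> real \<Rightarrow> real \<Rightarrow> real" where
  "pi2 a b w = (1 / Beta a b) * (1 / (1 + w)) * (1 / (1 + ln (1 + w)))
     * (ln (1 + ln (1 + w)) powr (a - 1)) / ((1 + ln (1 + ln (1 + w))) powr (a + b))"

end

theory Submission imports Defs "HOL-Real_Asymp.Real_Asymp" begin

definition hh :: "real \<Rightarrow> real" where "hh x = exp (exp (x / (1 - x)) - 1) - 1"
definition hdr :: "real \<Rightarrow> real" where "hdr x = exp (exp (x / (1 - x)) - 1) * exp (x / (1 - x)) / (1 - x)^2"

lemma Beta_pos: "a > 0 \<Longrightarrow> b > 0 \<Longrightarrow> Beta a b > (0::real)"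
  unfolding Beta_def by simp

lemma hh_deriv: "x < 1 \<Longrightarrow> (hh has_real_derivative hdr x) (at x)"
  unfolding hh_def hdr_def
  apply (rule derivative_eq_intros refl | simp)+
  apply (simp add: field_simps power2_eq_square)
  done

lemma hh_pos: "0 < x \<Longrightarrow> x < 1 \<Longrightarrow> hh x > 0"
  unfolding hh_def by simp

lemma ln1_ne: "(t::real) > 0 \<Longrightarrow> 1 + ln (1 + t) \<noteq> 0"
  using ln_gt_zero[of "1 + t"] by linarith

lemma lnln_pos: "(t::real) > 0 \<Longrightarrow> 0 < ln (1 + ln (1 + t))"
  by (intro ln_gt_zero) (simp add: ln_gt_zero)

lemma lnln_ne: "(t::real) > 0 \<Longrightarrow> 1 + ln (1 + ln (1 + t)) \<noteq> 0"
  using lnln_pos[of t] by linarith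

lemma lnln_ne0: "(t::real) > 0 \<Longrightarrow> ln (1 + ln (1 + t)) \<noteq> 0"
  using lnln_pos[of t] by linarith

lemma pi2_cont_on: "continuous_on {0<..} (pi2 a b)"
  unfolding pi2_def[abs_def]
  by (intro continuous_intros) (auto simp: ln1_ne lnln_ne lnln_ne0)

lemma pi2_cont: "w > 0 \<Longrightarrow> isCont (pi2 a b) w"
  using pi2_cont_on[of a b] continuous_on_eq_continuous_at[of "{0<..}" "pi2 a b"] by simp

lemma pi2_nonneg: "a > 0 \<Longrightarrow> b > 0 \<Longrightarrow> w > 0 \<Longrightarrow> pi2 a b w \<ge> 0"
  unfolding pi2_def using Beta_pos[of a b] by (auto intro!: divide_nonneg_pos mult_nonneg_nonneg)

lemma key_eq:
  assumes "a > 0" "b > 0" "0 < x" "x < 1"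
  shows "pi2 a b (hh x) * hdr x = x powr (a - 1) * (1 - x) powr (b - 1) / Beta a b"
proof -
  define u where "u = x / (1 - x)"
  have u: "u > 0" using assms unfolding u_def by simp
  have 1: "1 + hh x = exp (exp u - 1)" unfolding hh_def u_def by simp
  have 2: "ln (1 + hh x) = exp u - 1" using 1 by simp
  have 3: "1 + ln (1 + hh x) = exp u" using 2 by simp
  have 4: "ln (1 + ln (1 + hh x)) = u" using 3 by simp
  have 5: "1 + u = 1 / (1 - x)" using assms unfolding u_def by (simp add: field_simps)
  have hdr: "hdr x = exp (exp u - 1) * exp u * (1 + u)^2" unfolding hdr_def u_def[symmetric] 5
    by (simp add: power_divide)
  have "pi2 a b (hh x) * hdr x = u powr (a - 1) / (1 + u) powr (a + b) * (1 + u)^2 / Beta a b"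
    unfolding pi2_def 1 3 4 hdr by (simp add: field_simps)
  also have "u powr (a - 1) = x powr (a - 1) * (1 + u) powr (a - 1)"
    using assms 5 unfolding u_def by (simp add: powr_divide powr_minus_divide field_simps)
  also have "(1 + u)^2 = (1 + u) powr 2" using u by (simp add: powr_numeral)
  also have "x powr (a - 1) * (1 + u) powr (a - 1) / (1 + u) powr (a + b) * (1 + u) powr 2 / Beta a b
     = x powr (a - 1) * ((1 + u) powr (a - 1) / (1 + u) powr (a + b) * (1 + u) powr 2) / Beta a b"
    by simp
  also have "(1 + u) powr (a - 1) / (1 + u) powr (a + b) * (1 + u) powr 2 = (1 + u) powr (a - 1 - (a + b) + 2)"
    by (simp only: powr_add powr_diff)
  also have "(1 + u) powr (a - 1 - (a + b) + 2) = (1 - x) powr (b - 1)"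
  proof -
    have "a - 1 - (a + b) + 2 = - (b - 1)" by simp
    then have "(1 + u) powr (a - 1 - (a + b) + 2) = (1 / (1 - x)) powr (- (b - 1))" unfolding 5 by (rule arg_cong)
    also have "\<dots> = 1 / (1 / (1 - x)) powr (b - 1)" by (rule powr_minus_divide)
    also have "\<dots> = 1 / (1 / (1 - x) powr (b - 1))" by (simp only: powr_divide powr_one_eq_one)
    also have "\<dots> = (1 - x) powr (b - 1)" by simp
    finally show ?thesis .
  qed
  finally show ?thesis .
qed

lemma beta_int:
  assumes "a > 0" "b > 0"
  shows "set_integrable lborel {0<..<1} (\<lambda>x. x powr (a - 1) * (1 - x) powr (b - 1) / Beta a b)"
    "(LBINT x=0..1. x powr (a - 1) * (1 - x) powr (b - 1) / Beta a b) = 1"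
proof -
  let ?f = "\<lambda>x::real. x powr (a - 1) * (1 - x) powr (b - 1) / Beta a b"
  have B: "Beta a b > 0" using Beta_pos assms by blast
  have "(?f has_integral Beta a b / Beta a b) {0..1}"
    using has_integral_Beta_real[OF assms] by (intro has_integral_divide)
  then have hi: "(?f has_integral 1) {0<..<1}" using B by (simp add: has_integral_Icc_iff_Ioo)
  have "?f absolutely_integrable_on {0<..<1}"
  proof (rule nonnegative_absolutely_integrable_1)
    show "?f integrable_on {0<..<1}" using hi by (rule has_integral_integrable)
    show "0 \<le> ?f x" for x using B by (intro divide_nonneg_pos mult_nonneg_nonneg) simp_all
  qed
  then have "set_integrable lebesgue {0<..<1} ?f" by (simp add: absolutely_integrable_on_def)
  moreover have "(\<lambda>x. indicator {0<..<1} x *\<^sub>R ?f x) \<in> borel_measurable lborel"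
    by measurable
  ultimately show si: "set_integrable lborel {0<..<1} ?f"
    unfolding set_integrable_def using integrable_completion by blast
  have "(LBINT x=0..1. ?f x) = (LINT x : {0<..<1} | lborel. ?f x)"
    by (simp add: interval_lebesgue_integral_def zero_ereal_def one_ereal_def)
  also have "\<dots> = integral {0<..<1} ?f" by (rule set_borel_integral_eq_integral(2)[OF si])
  also have "\<dots> = 1" using hi by (rule integral_unique)
  finally show "(LBINT x=0..1. ?f x) = 1" .
qed

lemma hh_lim0: "(hh \<longlongrightarrow> 0) (at_right 0)"
  unfolding hh_def by real_asymp

lemma hh_lim1: "filterlim hh at_top (at_left 1)"
  unfolding hh_def by real_asymp

lemma integral_part:
  assumes "a > 0" "b > 0"
  shows "(pi2 a b has_integral 1) {0<..}"
proof -
  have sub: "set_integrable lborel (einterval 0 \<infinity>) (pi2 a b)"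
     "(LBINT x=0..\<infinity>. pi2 a b x) = (LBINT x=0..1. (pi2 a b (hh x) * hdr x))"
  proof -
    have p1: "(0::ereal) < 1" by simp
    have p2: "DERIV hh x :> hdr x" if "0 < ereal x" "ereal x < 1" for x
      using that by (intro hh_deriv) simp
    have p3: "isCont (pi2 a b) (hh x)" if "0 < ereal x" "ereal x < 1" for x
      using that by (intro pi2_cont hh_pos) auto
    have p4: "isCont hdr x" if "0 < ereal x" "ereal x < 1" for x
      using that unfolding hdr_def by (intro continuous_intros) auto
    have p5: "0 \<le> pi2 a b (hh x)" if "0 < ereal x" "ereal x < 1" for x
      using that assms by (intro pi2_nonneg hh_pos) auto
    have p6: "0 \<le> hdr x" for x unfolding hdr_def by simp
    have p7: "((ereal \<circ> hh \<circ> real_of_ereal) \<longlongrightarrow> 0) (at_right 0)"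
      unfolding zero_ereal_def at_right_ereal tendsto_compose_filtermap[symmetric]
      using hh_lim0 by (simp add: comp_def)
    have p8: "((ereal \<circ> hh \<circ> real_of_ereal) \<longlongrightarrow> \<infinity>) (at_left 1)"
      unfolding one_ereal_def at_left_ereal tendsto_compose_filtermap[symmetric]
      using hh_lim1 by (simp add: comp_def tendsto_PInfty_eq_at_top)
    have "set_integrable lborel {0<..<1} (\<lambda>x. x powr (a - 1) * (1 - x) powr (b - 1) / Beta a b)"
      by (rule beta_int(1)[OF assms])
    then have p9: "set_integrable lborel (einterval 0 1) (\<lambda>x. pi2 a b (hh x) * hdr x)"
      unfolding zero_ereal_def one_ereal_def einterval_eq_Icc
      by (rule set_integrable_cong[THEN iffD1, rotated -1]) (use key_eq assms in auto)
    show "set_integrable lborel (einterval 0 \<infinity>) (pi2 a b)"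
     "(LBINT x=0..\<infinity>. pi2 a b x) = (LBINT x=0..1. (pi2 a b (hh x) * hdr x))"
      using interval_integral_substitution_nonneg[OF p1 p2 p3 p4 p5 p6 p7 p8 p9] by auto
  qed
  have "(LBINT x=0..1. (pi2 a b (hh x) * hdr x)) = (LBINT x=0..1. x powr (a - 1) * (1 - x) powr (b - 1) / Beta a b)"
    unfolding interval_lebesgue_integral_def zero_ereal_def one_ereal_def
    by (intro if_cong refl set_lebesgue_integral_cong arg_cong[where f=uminus]) (auto simp: key_eq assms)
  then have val: "(LBINT x=0..\<infinity>. pi2 a b x) = 1" using sub(2) beta_int(2)[OF assms] by simp
  have si: "set_integrable lborel {0<..} (pi2 a b)" using sub(1) by (simp add: zero_ereal_def)
  have "(LBINT x=0..\<infinity>. pi2 a b x) = (LINT x : {0<..} | lborel. pi2 a b x)"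
    by (simp add: interval_lebesgue_integral_def zero_ereal_def)
  also have "\<dots> = integral {0<..} (pi2 a b)" by (rule set_borel_integral_eq_integral(2)[OF si])
  finally have "integral {0<..} (pi2 a b) = 1" using val by simp
  moreover have "pi2 a b integrable_on {0<..}" by (rule set_borel_integral_eq_integral(1)[OF si])
  ultimately show ?thesis by (simp add: has_integral_iff)
qed

lemma as0: fixes a b B :: real assumes "a>0" "b>0" "B>0"
  shows "(\<lambda>w. (1 / B) * (1 / (1 + w)) * (1 / (1 + ln (1 + w)))
     * (ln (1 + ln (1 + w)) powr (a - 1)) / ((1 + ln (1 + ln (1 + w))) powr (a + b))) \<sim>[at_right 0] (\<lambda>w. (1/B) * w powr (a - 1))"
  using assms by real_asymp
lemma asT: fixes a b B :: real assumes "a>0" "b>0" "B>0"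
  shows "(\<lambda>w. (1 / B) * (1 / (1 + w)) * (1 / (1 + ln (1 + w)))
     * (ln (1 + ln (1 + w)) powr (a - 1)) / ((1 + ln (1 + ln (1 + w))) powr (a + b))) \<sim>[at_top] (\<lambda>w. (1/B) * (1 / w) * (1 / ln w) * ln (ln w) powr (-(1 + b)))"
  using assms by real_asymp
lemma asT2: fixes a b B :: real assumes "a>0" "b>0" "B>0"
  shows "(\<lambda>w. w* ((1 / B) * (1 / (1 + w)) * (1 / (1 + ln (1 + w)))
     * (ln (1 + ln (1 + w)) powr (a - 1)) / ((1 + ln (1 + ln (1 + w))) powr (a + b)))) \<sim>[at_top] (\<lambda>t. (1/B) / ((1 + ln (1 + t)) * (1 + ln (1 + ln (1 + t))) powr (1 + b)))"
  using assms by real_asymp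
lemma limR0: fixes a b B :: real assumes "a>0" "b>0" "B>0"
  shows "((\<lambda>w. w * ((1 / B) * (1 / (1 + w)) * (1 / (1 + ln (1 + w)))
     * (ln (1 + ln (1 + w)) powr (a - 1)) / ((1 + ln (1 + ln (1 + w))) powr (a + b)))
    * ((1 + ln (1 + 1 / w)) * (1 + ln (1 + w)) * (1 + ln (1 + ln (1 + 1 / w))) powr (1 + b) * (1 + ln (1 + ln (1 + w))) powr (1 + b))) \<longlongrightarrow> 0) (at_right 0)"
  using assms by real_asymp
lemma limRT: fixes a b B :: real assumes "a>0" "b>0" "B>0"
  shows "((\<lambda>w. w * ((1 / B) * (1 / (1 + w)) * (1 / (1 + ln (1 + w)))
     * (ln (1 + ln (1 + w)) powr (a - 1)) / ((1 + ln (1 + ln (1 + w))) powr (a + b)))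
    * ((1 + ln (1 + 1 / w)) * (1 + ln (1 + w)) * (1 + ln (1 + ln (1 + 1 / w))) powr (1 + b) * (1 + ln (1 + ln (1 + w))) powr (1 + b))) \<longlongrightarrow> 1/B) at_top"
  using assms by real_asymp

lemma inv1_ne: "(x::real) > 0 \<Longrightarrow> 1 + 1 / x \<noteq> 0"
proof -
  assume "x > 0"
  then have "1 / x > 0" by simp
  then show ?thesis by linarith
qed

lemma div4: "(x::real) / (A * B * C * D) = x * (1 / A) * (1 / B) * (1 / C) * (1 / D)"
  by simp

lemma bounded_aux:
  fixes R :: "real \<Rightarrow> real"
  assumes c: "continuous_on {0<..} R" and l1: "(R \<longlongrightarrow> l1) (at_right 0)" and l2: "(R \<longlongrightarrow> l2) at_top"
  shows "\<exists>M. \<forall>t>0. R t \<le> M"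
proof -
  have "eventually (\<lambda>t. R t < l1 + 1) (at_right 0)"
    using l1 by (rule order_tendstoD) simp
  then obtain d where d: "d > 0" "\<And>t. 0 < t \<Longrightarrow> t < d \<Longrightarrow> R t < l1 + 1"
    unfolding eventually_at_right_field by auto
  have "eventually (\<lambda>t. R t < l2 + 1) at_top"
    using l2 by (rule order_tendstoD) simp
  then obtain T where T: "\<And>t. t \<ge> T \<Longrightarrow> R t < l2 + 1"
    unfolding eventually_at_top_linorder by auto
  have "continuous_on {d..T} R" by (rule continuous_on_subset[OF c]) (use d(1) in auto)
  then have "compact (R ` {d..T})" by (rule compact_continuous_image) simp
  then have "bounded (R ` {d..T})" by (rule compact_imp_bounded)
  then obtain K where K0: "\<forall>y\<in>R ` {d..T}. \<bar>y\<bar> \<le> K" unfolding bounded_real by blast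
  have K: "\<bar>R t\<bar> \<le> K" if "t \<in> {d..T}" for t using K0 that by blast
  show ?thesis
  proof (intro exI allI impI)
    fix t :: real assume "t > 0"
    show "R t \<le> max K (max (l1 + 1) (l2 + 1))"
    proof (cases "t < d")
      case True then show ?thesis using d(2)[OF \<open>t > 0\<close>] by auto
    next
      case False
      show ?thesis
      proof (cases "t \<ge> T")
        case True then show ?thesis using T by force
      next
        case False
        then have "\<bar>R t\<bar> \<le> K" using K \<open>\<not> t < d\<close> by auto
        then show ?thesis by auto
      qed
    qed
  qed
qed

lemma bound_part:
  assumes "a > 0" "b > 0"
  shows "\<exists>M>0. \<forall>t>0. t * pi2 a b t \<le>
           M * (1 / (1 + ln (1 + 1 / t))) * (1 / (1 + ln (1 + t)))
             * (1 / (1 + ln (1 + ln (1 + 1 / t))) powr (1 + b))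
             * (1 / (1 + ln (1 + ln (1 + t))) powr (1 + b))"
proof -
  define P where "P t = (1 + ln (1 + 1 / t)) * (1 + ln (1 + t)) * (1 + ln (1 + ln (1 + 1 / t))) powr (1 + b) * (1 + ln (1 + ln (1 + t))) powr (1 + b)" for t :: real
  define R where "R t = t * pi2 a b t * P t" for t
  have Bp: "Beta a b > 0" using Beta_pos assms by blast
  have Ppos: "P t > 0" if "t > 0" for t
    unfolding P_def using that lnln_pos[of t] lnln_pos[of "1/t"]
    by (intro mult_pos_pos) (auto simp: add_pos_pos lnln_ne)
  have cP: "continuous_on {0<..} P"
    unfolding P_def[abs_def]
    by (intro continuous_intros) (auto simp: ln1_ne lnln_ne inv1_ne)
  have cpi: "continuous_on {0<..} (pi2 a b)"
    by (intro continuous_at_imp_continuous_on ballI pi2_cont) auto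
  have c: "continuous_on {0<..} R"
    unfolding R_def[abs_def] by (intro continuous_on_mult continuous_on_id cpi cP)
  have l1: "(R \<longlongrightarrow> 0) (at_right 0)"
    unfolding R_def[abs_def] P_def pi2_def by (rule limR0[OF assms Bp])
  have l2: "(R \<longlongrightarrow> 1 / Beta a b) at_top"
    unfolding R_def[abs_def] P_def pi2_def by (rule limRT[OF assms Bp])
  obtain M where M: "\<And>t. t > 0 \<Longrightarrow> R t \<le> M" using bounded_aux[OF c l1 l2] by blast
  show ?thesis
  proof (intro exI[of _ "max M 1"] conjI allI impI)
    fix t :: real assume t: "t > 0"
    have "t * pi2 a b t = R t / P t" unfolding R_def using Ppos[OF t] by simp
    also have "\<dots> \<le> max M 1 / P t" using M[OF t] Ppos[OF t] by (intro divide_right_mono) auto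
    also have "\<dots> = max M 1 * (1 / (1 + ln (1 + 1 / t))) * (1 / (1 + ln (1 + t)))
             * (1 / (1 + ln (1 + ln (1 + 1 / t))) powr (1 + b))
             * (1 / (1 + ln (1 + ln (1 + t))) powr (1 + b))" unfolding P_def by (rule div4)
    finally show "t * pi2 a b t \<le> \<dots>" .
  qed simp
qed

theorem mainTheorem3:
  fixes a b :: real
  assumes "a > 0" and "b > 0"
  shows "(pi2 a b has_integral 1) {0<..}
    \<and> (\<exists>K>0. pi2 a b \<sim>[at_right 0] (\<lambda>w. K * w powr (a - 1)))
    \<and> (\<exists>K>0. pi2 a b \<sim>[at_top]
           (\<lambda>w. K * (1 / w) * (1 / ln w) * ln (ln w) powr (-(1 + b))))
    \<and> (\<exists>C>0. (\<lambda>t. t * pi2 a b t) \<sim>[at_top]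
           (\<lambda>t. C / ((1 + ln (1 + t)) * (1 + ln (1 + ln (1 + t))) powr (1 + b))))
    \<and> (\<exists>M>0. \<forall>t>0. t * pi2 a b t \<le>
           M * (1 / (1 + ln (1 + 1 / t))) * (1 / (1 + ln (1 + t)))
             * (1 / (1 + ln (1 + ln (1 + 1 / t))) powr (1 + b))
             * (1 / (1 + ln (1 + ln (1 + t))) powr (1 + b)))"
proof -
  have Bp: "Beta a b > 0" using Beta_pos assms by blast
  have e: "pi2 a b = (\<lambda>w. (1 / Beta a b) * (1 / (1 + w)) * (1 / (1 + ln (1 + w)))
     * (ln (1 + ln (1 + w)) powr (a - 1)) / ((1 + ln (1 + ln (1 + w))) powr (a + b)))"
    by (rule ext) (simp add: pi2_def)
  have h2: "pi2 a b \<sim>[at_right 0] (\<lambda>w. (1 / Beta a b) * w powr (a - 1))"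
    using as0[OF assms Bp] by (simp only: e)
  have h3: "pi2 a b \<sim>[at_top] (\<lambda>w. (1 / Beta a b) * (1 / w) * (1 / ln w) * ln (ln w) powr (-(1 + b)))"
    using asT[OF assms Bp] by (simp only: e)
  have h4: "(\<lambda>t. t * pi2 a b t) \<sim>[at_top] (\<lambda>t. (1 / Beta a b) / ((1 + ln (1 + t)) * (1 + ln (1 + ln (1 + t))) powr (1 + b)))"
    using asT2[OF assms Bp] by (simp only: e)
  have pB: "1 / Beta a b > 0" using Bp by simp
  show ?thesis
  proof (intro conjI)
    show "(pi2 a b has_integral 1) {0<..}" by (rule integral_part[OF assms])
    show "\<exists>K>0. pi2 a b \<sim>[at_right 0] (\<lambda>w. K * w powr (a - 1))"
      by (rule exI[of _ "1 / Beta a b"], rule conjI[OF pB h2])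
    show "\<exists>K>0. pi2 a b \<sim>[at_top]
           (\<lambda>w. K * (1 / w) * (1 / ln w) * ln (ln w) powr (-(1 + b)))"
      by (rule exI[of _ "1 / Beta a b"], rule conjI[OF pB h3])
    show "\<exists>C>0. (\<lambda>t. t * pi2 a b t) \<sim>[at_top]
           (\<lambda>t. C / ((1 + ln (1 + t)) * (1 + ln (1 + ln (1 + t))) powr (1 + b)))"
      by (rule exI[of _ "1 / Beta a b"], rule conjI[OF pB h4])
  qed (rule bound_part[OF assms])
qed

end
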